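(* Let $\langle D,\Gamma,\Delta\rangle$ be a planning problem with $(D,\Gamma)$ consistent and deterministic (i.e. $|\Phi(a,s)|\le 1$ for every action $a$ and state $s$) and $\Delta=p_1\wedge\dots\wedge p_k$ a conjunction of fluent literals, and let $n\ge0$. Then: (1) for each plan $a_0,\dots,a_{n-1}$ achieving $\Delta$ from $\Gamma$ there exists an answer set $M$ of $\Pi_n$ with $occ(a_i,i)\in M$ for all $i\in\{0,\dots,n-1\}$; (2) for each answer set $M$ of $\Pi_n$ there exists an integer $0\le k\le n$ such that, with $a_i$ the (unique) actions with $occ(a_i,i)\in M$ for $0\le i<k$, the sequence $a_0,\dots,a_{k-1}$ is a plan achieving $\Delta$ from $\Gamma$, and if $k<n$ then no action is executable in the state reached by executing $a_0,\dots,a_{k-1}$ in $s_0^\Gamma$.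
   Context: Action language $\mathcal{B}$: fix finite sets $\mathbf{F}$ of fluents and $\mathbf{A}$ of actions. A fluent literal is $f$ or $\neg f$ ($f\in\mathbf{F}$); the complement $\bar l$ of $f$ is $\neg f$ and of $\neg f$ is $f$. A set of fluent literals is consistent if it contains no pair $f,\neg f$; an interpretation is a maximal consistent set. For a set $u$ of literals, $u\models p_1\wedge\dots\wedge p_k$ means $\{p_1,\dots,p_k\}\subseteq u$. A domain description $D$ is a finite set of static causal laws $\mathbf{caused}(\{p_1,\dots,p_k\},f)$ (their set is $D_C$), dynamic causal laws $\mathbf{causes}(a,f,\{p_1,\dots,p_k\})$ and executability conditions $\mathbf{executable}(a,\{p_1,\dots,p_k\})$, with $a\in\mathbf{A}$ and $f,p_i$ fluent literals; $\Gamma$ is a set of propositions $\mathbf{initially}(f)$. A consistent set $u$ is closed under $D_C$ if for every $\mathbf{caused}(P,f)\in D_C$ with $P\subseteq u$, $f\in u$; $Cl_{D_C}(u)$ is the least consistent superset of $u$ closed under $D_C$ (undefined if none). A state is an interpretation closed under $D_C$. Action $a$ is executable in state $s$ if some $\mathbf{executable}(a,P)\in D$ has $P\subseteq s$. $E(a,s)=\{f\mid \mathbf{causes}(a,f,P)\in D,\ P\subseteq s\}$. $\Phi(a,s)=\{s'\mid s'\text{ a state},\ s'=Cl_{D_C}(E(a,s)\cup(s\cap s'))\}$ if $a$ is executable in $s$, and $\Phi(a,s)=\emptyset$ otherwise. A trajectory is a sequence $s_0a_0s_1\dots a_{m-1}s_m$ of states $s_i$ and actions $a_i$ with $s_{i+1}\in\Phi(a_i,s_i)$.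 $D$ is consistent if $\Phi(a,s)\ne\emptyset$ whenever $a$ is executable in state $s$; $(D,\Gamma)$ is consistent if $D$ is consistent and $s_0^\Gamma:=\{f\mid\mathbf{initially}(f)\in\Gamma\}$ is a state of $D$. A sequence of actions $a_0,\dots,a_{m-1}$ is a plan achieving $\Delta$ from $\Gamma$ (in the deterministic case) if there is a trajectory $s_0a_0s_1\dots a_{m-1}s_m$ with $s_0=s_0^\Gamma$ and $s_m\models\Delta$. Answer sets: a ground normal program consists of rules $h\leftarrow b_1,\dots,b_m,\mathit{not}\,c_1,\dots,\mathit{not}\,c_r$ and constraints $\bot\leftarrow b_1,\dots,b_m,\mathit{not}\,c_1,\dots,\mathit{not}\,c_r$. For a set $S$ of atoms, the reduct $\Pi^S$ deletes every rule/constraint containing $\mathit{not}\,c$ with $c\in S$ and deletes all $\mathit{not}$-literals from the rest; $S$ is an answer set of $\Pi$ if $S$ is the least set of atoms closed under the non-constraint rules of $\Pi^S$ and no constraint of $\Pi^S$ has its whole body contained in $S$. The program $\pi$ (ground; $t$ ranges over $\{0,\dots,n\}$ unless stated): (1) $holds(l,0)\leftarrow$ for each $\mathbf{initially}(l)\in\Gamma$; (2) $possible(a,t)\leftarrow holds(p_1,t),\dots,holds(p_k,t)$ for each $\mathbf{executable}(a,\{p_1,\dots,p_k\})\in D$; (3) for $t\in\{0,\dots,n-1\}$, $holds(f,t+1)\leftarrow occ(a,t),possible(a,t),holds(p_1,t),\dots,holds(p_k,t)$ for each $\mathbf{causes}(a,f,\{p_1,\dots,p_k\})\in D$; (4) $holds(f,t)\leftarrow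 holds(p_1,t),\dots,holds(p_k,t)$ for each $\mathbf{caused}(\{p_1,\dots,p_k\},f)\in D$; (5) $occ(a,t)\leftarrow possible(a,t),\mathit{not}\,nocc(a,t)$ for each action $a$; (6) $nocc(a,t)\leftarrow occ(b,t)$ for each pair of distinct actions $a\ne b$; (7) for $t\in\{0,\dots,n-1\}$, $holds(l,t+1)\leftarrow holds(l,t),\mathit{not}\,holds(\bar l,t+1)$ for each fluent literal $l$; (8) $\bot\leftarrow holds(f,t),holds(\neg f,t)$ for each fluent $f$. $\Pi_n$ is $\pi$ together with the rule $goal\leftarrow holds(p_1,n),\dots,holds(p_k,n)$ (where $\Delta=p_1\wedge\dots\wedge p_k$) and the constraint $\bot\leftarrow\mathit{not}\,goal$. For a set $M$ of atoms, $s_i(M)=\{l\mid l\text{ a fluent literal},\ holds(l,i)\in M\}$. *)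

theory Defs
  imports Main
begin

datatype 'f lit = Pos 'f | Neg 'f

fun comp :: "'f lit \<Rightarrow> 'f lit" where
  "comp (Pos f) = Neg f"
| "comp (Neg f) = Pos f"

text \<open>A domain description: static causal laws caused(P,l) as pairs (P,l),
  dynamic causal laws causes(a,l,P) as triples (a,l,P),
  executability conditions executable(a,P) as pairs (a,P).\<close>
record ('f, 'a) domain =
  static  :: "('f lit set \<times> 'f lit) set"
  dynamic :: "('a \<times> 'f lit \<times> 'f lit set) set"
  execs   :: "('a \<times> 'f lit set) set"

definition consistent_lits :: "'f lit set \<Rightarrow> bool" where
  "consistent_lits u \<longleftrightarrow> (\<forall>f. \<not> (Pos f \<in> u \<and> Neg f \<in> u))"

definition is_interpretation :: "'f lit set \<Rightarrow> bool" where
  "is_interpretation u \<longleftrightarrow> consistent_lits u \<and> (\<forall>f. Pos f \<in> u \<or> Neg f \<in> u)"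

definition closed_under :: "('f, 'a) domain \<Rightarrow> 'f lit set \<Rightarrow> bool" where
  "closed_under D u \<longleftrightarrow> (\<forall>P l. (P, l) \<in> static D \<and> P \<subseteq> u \<longrightarrow> l \<in> u)"

text \<open>Least superset closed under the static laws (consistency not required).
  Cl_{D_C}(u) is defined iff this set is consistent, and then equals it.\<close>
definition closure :: "('f, 'a) domain \<Rightarrow> 'f lit set \<Rightarrow> 'f lit set" where
  "closure D u = \<Inter>{X. u \<subseteq> X \<and> closed_under D X}"

definition Cl_eq :: "('f, 'a) domain \<Rightarrow> 'f lit set \<Rightarrow> 'f lit set \<Rightarrow> bool" where
  "Cl_eq D u v \<longleftrightarrow> consistent_lits (closure D u) \<and> v = closure D u"

definition is_state :: "('f, 'a) domain \<Rightarrow> 'f lit set \<Rightarrow> bool" where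
  "is_state D s \<longleftrightarrow> is_interpretation s \<and> closed_under D s"

definition executable :: "('f, 'a) domain \<Rightarrow> 'a \<Rightarrow> 'f lit set \<Rightarrow> bool" where
  "executable D a s \<longleftrightarrow> (\<exists>P. (a, P) \<in> execs D \<and> P \<subseteq> s)"

definition E :: "('f, 'a) domain \<Rightarrow> 'a \<Rightarrow> 'f lit set \<Rightarrow> 'f lit set" where
  "E D a s = {l. \<exists>P. (a, l, P) \<in> dynamic D \<and> P \<subseteq> s}"

definition Phi :: "('f, 'a) domain \<Rightarrow> 'a \<Rightarrow> 'f lit set \<Rightarrow> 'f lit set set" where
  "Phi D a s = (if executable D a s
      then {s'. is_state D s' \<and> Cl_eq D (E D a s \<union> (s \<inter> s')) s'} else {})"

definition trajectory :: "('f, 'a) domain \<Rightarrow> 'a list \<Rightarrow> 'f lit set list \<Rightarrow> bool" where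
  "trajectory D as ss \<longleftrightarrow> length ss = Suc (length as)
     \<and> (\<forall>i<length ss. is_state D (ss ! i))
     \<and> (\<forall>i<length as. ss ! Suc i \<in> Phi D (as ! i) (ss ! i))"

definition domain_consistent :: "('f, 'a) domain \<Rightarrow> bool" where
  "domain_consistent D \<longleftrightarrow>
     (\<forall>a s. is_state D s \<and> executable D a s \<longrightarrow> Phi D a s \<noteq> {})"

text \<open>Gamma is represented by the set of literals l with initially(l) in Gamma,
  i.e. by s_0^Gamma itself.\<close>
definition problem_consistent :: "('f, 'a) domain \<Rightarrow> 'f lit set \<Rightarrow> bool" where
  "problem_consistent D \<Gamma> \<longleftrightarrow> domain_consistent D \<and> is_state D \<Gamma>"

definition deterministic :: "('f, 'a) domain \<Rightarrow> bool" where
  "deterministic D \<longleftrightarrow> (\<forall>a s. is_state D s \<longrightarrow>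
      (\<forall>s1 \<in> Phi D a s. \<forall>s2 \<in> Phi D a s. s1 = s2))"

text \<open>Delta = p_1 /\ ... /\ p_k is represented by the set {p_1,...,p_k}.\<close>
definition is_plan :: "('f, 'a) domain \<Rightarrow> 'f lit set \<Rightarrow> 'f lit set \<Rightarrow> 'a list \<Rightarrow> bool" where
  "is_plan D \<Gamma> \<Delta> as \<longleftrightarrow>
     (\<exists>ss. trajectory D as ss \<and> ss ! 0 = \<Gamma> \<and> \<Delta> \<subseteq> last ss)"

datatype ('f, 'a) atom =
    Holds "'f lit" nat | Possible 'a nat | Occ 'a nat | Nocc 'a nat | Goal

text \<open>A rule (h, B+, B-): head h (None = bottom, i.e. a constraint),
  positive body B+, negated body B- (the atoms c with "not c").\<close>
type_synonym 'at rule = "'at option \<times> 'at set \<times> 'at set"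

definition reduct :: "'at rule set \<Rightarrow> 'at set \<Rightarrow> ('at option \<times> 'at set) set" where
  "reduct \<Pi> S = {(h, pos) | h pos neg. (h, pos, neg) \<in> \<Pi> \<and> neg \<inter> S = {}}"

definition least_model :: "('at option \<times> 'at set) set \<Rightarrow> 'at set" where
  "least_model R = \<Inter>{X. \<forall>h pos. (Some h, pos) \<in> R \<and> pos \<subseteq> X \<longrightarrow> h \<in> X}"

definition answer_set :: "'at rule set \<Rightarrow> 'at set \<Rightarrow> bool" where
  "answer_set \<Pi> S \<longleftrightarrow> S = least_model (reduct \<Pi> S)
     \<and> (\<forall>pos. (None, pos) \<in> reduct \<Pi> S \<longrightarrow> \<not> pos \<subseteq> S)"

definition hs :: "'f lit set \<Rightarrow> nat \<Rightarrow> ('f, 'a) atom set" where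
  "hs P t = (\<lambda>p. Holds p t) ` P"

definition prog_pi :: "('f, 'a) domain \<Rightarrow> 'f lit set \<Rightarrow> nat \<Rightarrow> ('f, 'a) atom rule set" where
  "prog_pi D \<Gamma> n =
      {(Some (Holds l 0), {}, {}) | l. l \<in> \<Gamma>}
    \<union> {(Some (Possible a t), hs P t, {}) | a P t. (a, P) \<in> execs D \<and> t \<le> n}
    \<union> {(Some (Holds f (Suc t)), {Occ a t, Possible a t} \<union> hs P t, {}) | a f P t.
          (a, f, P) \<in> dynamic D \<and> t < n}
    \<union> {(Some (Holds f t), hs P t, {}) | P f t. (P, f) \<in> static D \<and> t \<le> n}
    \<union> {(Some (Occ a t), {Possible a t}, {Nocc a t}) | a t. t \<le> n}
    \<union> {(Some (Nocc a t), {Occ b t}, {}) | a b t. a \<noteq> b \<and> t \<le> n}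
    \<union> {(Some (Holds l (Suc t)), {Holds l t}, {Holds (comp l) (Suc t)}) | l t. t < n}
    \<union> {(None, {Holds (Pos f) t, Holds (Neg f) t}, {}) | f t. t \<le> n}"

definition prog_Pi :: "('f, 'a) domain \<Rightarrow> 'f lit set \<Rightarrow> 'f lit set \<Rightarrow> nat \<Rightarrow> ('f, 'a) atom rule set" where
  "prog_Pi D \<Gamma> \<Delta> n = prog_pi D \<Gamma> n
     \<union> {(Some Goal, hs \<Delta> n, {}), (None, {}, {Goal})}"

end

theory Submission
  imports Defs
begin


lemma closure_sub: "u \<subseteq> closure D u"
  unfolding closure_def by blast

lemma closure_closed: "closed_under D (closure D u)"
  unfolding closure_def closed_under_def by blast

lemma closure_least: "u \<subseteq> X \<Longrightarrow> closed_under D X \<Longrightarrow> closure D u \<subseteq> X"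
  unfolding closure_def by blast

lemma lm_closed: "(Some h, pos) \<in> R \<Longrightarrow> pos \<subseteq> least_model R \<Longrightarrow> h \<in> least_model R"
  unfolding least_model_def by blast

lemma lm_least: "(\<And>h pos. (Some h, pos) \<in> R \<Longrightarrow> pos \<subseteq> X \<Longrightarrow> h \<in> X) \<Longrightarrow> least_model R \<subseteq> X"
  unfolding least_model_def by blast

lemma reduct_iff: "(h, pos) \<in> reduct P S \<longleftrightarrow> (\<exists>neg. (h, pos, neg) \<in> P \<and> neg \<inter> S = {})"
  unfolding reduct_def by blast

lemma as_closed:
  assumes "answer_set P M" "(Some h, pos, neg) \<in> P" "neg \<inter> M = {}" "pos \<subseteq> M"
  shows "h \<in> M"
proof -
  have M: "M = least_model (reduct P M)" using assms(1) unfolding answer_set_def by blast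
  have "(Some h, pos) \<in> reduct P M" using assms(2,3) reduct_iff by blast
  then show ?thesis using lm_closed[of h pos "reduct P M"] assms(4) M by simp
qed

lemma as_least:
  assumes "answer_set P M"
    and "\<And>h pos neg. (Some h, pos, neg) \<in> P \<Longrightarrow> neg \<inter> M = {} \<Longrightarrow> pos \<subseteq> X \<Longrightarrow> h \<in> X"
  shows "M \<subseteq> X"
proof -
  have M: "M = least_model (reduct P M)" using assms(1) unfolding answer_set_def by blast
  show ?thesis
    by (subst M, rule lm_least) (auto simp: reduct_iff intro: assms(2))
qed

lemma as_constr:
  assumes "answer_set P M" "(None, pos, neg) \<in> P" "neg \<inter> M = {}"
  shows "\<not> pos \<subseteq> M"
  using assms unfolding answer_set_def using reduct_iff by blast

lemma as_supp:
  assumes "answer_set P M" "h \<in> M"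
  shows "\<exists>pos neg. (Some h, pos, neg) \<in> P \<and> neg \<inter> M = {} \<and> pos \<subseteq> M"
proof (rule ccontr)
  assume nh: "\<not> ?thesis"
  have "M \<subseteq> M - {h}"
  proof (rule as_least[OF assms(1)])
    fix h' pos neg assume r: "(Some h', pos, neg) \<in> P" "neg \<inter> M = {}" "pos \<subseteq> M - {h}"
    then have "h' \<in> M" using as_closed[OF assms(1)] by blast
    moreover have "h' \<noteq> h" using nh r by blast
    ultimately show "h' \<in> M - {h}" by blast
  qed
  then show False using assms(2) by blast
qed

lemma Pi_holds_cases:
  "(Some (Holds l t), pos, neg) \<in> prog_Pi D \<Gamma> \<Delta> n \<Longrightarrow>
     (t = 0 \<and> l \<in> \<Gamma> \<and> pos = {} \<and> neg = {})
   \<or> (\<exists>a P t'. t = Suc t' \<and> t' < n \<and> (a, l, P) \<in> dynamic D \<and> pos = {Occ a t', Possible a t'} \<union> hs P t' \<and> neg = {})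
   \<or> (\<exists>P. (P, l) \<in> static D \<and> t \<le> n \<and> pos = hs P t \<and> neg = {})
   \<or> (\<exists>t'. t = Suc t' \<and> t' < n \<and> pos = {Holds l t'} \<and> neg = {Holds (comp l) t})"
  unfolding prog_Pi_def prog_pi_def by (elim UnE insertE emptyE; simp; blast?)

lemma Pi_poss_cases:
  "(Some (Possible a t), pos, neg) \<in> prog_Pi D \<Gamma> \<Delta> n \<Longrightarrow>
     (\<exists>P. (a, P) \<in> execs D \<and> t \<le> n \<and> pos = hs P t \<and> neg = {})"
  unfolding prog_Pi_def prog_pi_def by (elim UnE insertE emptyE; simp; blast?)

lemma Pi_occ_cases:
  "(Some (Occ a t), pos, neg) \<in> prog_Pi D \<Gamma> \<Delta> n \<Longrightarrow>
     t \<le> n \<and> pos = {Possible a t} \<and> neg = {Nocc a t}"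
  unfolding prog_Pi_def prog_pi_def by (elim UnE insertE emptyE; simp; blast?)

lemma Pi_nocc_cases:
  "(Some (Nocc a t), pos, neg) \<in> prog_Pi D \<Gamma> \<Delta> n \<Longrightarrow>
     (\<exists>b. a \<noteq> b \<and> t \<le> n \<and> pos = {Occ b t} \<and> neg = {})"
  unfolding prog_Pi_def prog_pi_def by (elim UnE insertE emptyE; simp; blast?)

lemma Pi_goal_cases:
  "(Some Goal, pos, neg) \<in> prog_Pi D \<Gamma> \<Delta> n \<Longrightarrow> pos = hs \<Delta> n \<and> neg = {}"
  unfolding prog_Pi_def prog_pi_def by (elim UnE insertE emptyE; simp)

lemma Pi_none_cases:
  "(None, pos, neg) \<in> prog_Pi D \<Gamma> \<Delta> n \<Longrightarrow>
     (\<exists>f t. t \<le> n \<and> pos = {Holds (Pos f) t, Holds (Neg f) t} \<and> neg = {}) \<or> (pos = {} \<and> neg = {Goal})"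
  unfolding prog_Pi_def prog_pi_def by (elim UnE insertE emptyE; simp; blast?)



lemma Pi_init: "l \<in> \<Gamma> \<Longrightarrow> (Some (Holds l 0), {}, {}) \<in> prog_Pi D \<Gamma> \<Delta> n"
  by (simp add: prog_Pi_def prog_pi_def; blast?)
lemma Pi_poss: "(a, P) \<in> execs D \<Longrightarrow> t \<le> n \<Longrightarrow> (Some (Possible a t), hs P t, {}) \<in> prog_Pi D \<Gamma> \<Delta> n"
  by (simp add: prog_Pi_def prog_pi_def; blast?)
lemma Pi_dyn: "(a, f, P) \<in> dynamic D \<Longrightarrow> t < n \<Longrightarrow>
   (Some (Holds f (Suc t)), {Occ a t, Possible a t} \<union> hs P t, {}) \<in> prog_Pi D \<Gamma> \<Delta> n"
  by (simp add: prog_Pi_def prog_pi_def; blast?)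
lemma Pi_static: "(P, f) \<in> static D \<Longrightarrow> t \<le> n \<Longrightarrow> (Some (Holds f t), hs P t, {}) \<in> prog_Pi D \<Gamma> \<Delta> n"
  by (simp add: prog_Pi_def prog_pi_def; blast?)
lemma Pi_occ: "t \<le> n \<Longrightarrow> (Some (Occ a t), {Possible a t}, {Nocc a t}) \<in> prog_Pi D \<Gamma> \<Delta> n"
  by (simp add: prog_Pi_def prog_pi_def; blast?)
lemma Pi_nocc: "a \<noteq> b \<Longrightarrow> t \<le> n \<Longrightarrow> (Some (Nocc a t), {Occ b t}, {}) \<in> prog_Pi D \<Gamma> \<Delta> n"
  by (simp add: prog_Pi_def prog_pi_def; blast?)
lemma Pi_inert: "t < n \<Longrightarrow> (Some (Holds l (Suc t)), {Holds l t}, {Holds (comp l) (Suc t)}) \<in> prog_Pi D \<Gamma> \<Delta> n"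
  by (simp add: prog_Pi_def prog_pi_def; blast?)
lemma Pi_cons: "t \<le> n \<Longrightarrow> (None, {Holds (Pos f) t, Holds (Neg f) t}, {}) \<in> prog_Pi D \<Gamma> \<Delta> n"
  by (simp add: prog_Pi_def prog_pi_def; blast?)
lemma Pi_goal: "(Some Goal, hs \<Delta> n, {}) \<in> prog_Pi D \<Gamma> \<Delta> n"
  by (simp add: prog_Pi_def)
lemma Pi_goalc: "(None, {}, {Goal}) \<in> prog_Pi D \<Gamma> \<Delta> n"
  by (simp add: prog_Pi_def)



lemma hs_sub: "hs P t \<subseteq> X \<longleftrightarrow> (\<forall>p\<in>P. Holds p t \<in> X)"
  unfolding hs_def by blast

lemma interp_eq: "is_interpretation A \<Longrightarrow> consistent_lits B \<Longrightarrow> A \<subseteq> B \<Longrightarrow> A = B"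
  unfolding is_interpretation_def consistent_lits_def
  by (metis lit.exhaust subsetD subsetI subset_antisym)

lemma comp_ne: "comp l \<noteq> l" by (cases l) auto



definition st :: "('f, 'a) atom set \<Rightarrow> nat \<Rightarrow> 'f lit set" where
  "st M t = {l. Holds l t \<in> M}"

context
  fixes D :: "('f, 'a) domain" and \<Gamma> \<Delta> :: "'f lit set" and n :: nat and M
  assumes AS: "answer_set (prog_Pi D \<Gamma> \<Delta> n) M" and G: "is_state D \<Gamma>"
begin

lemma holds_le: "Holds l t \<in> M \<Longrightarrow> t \<le> n"
proof -
  assume "Holds l t \<in> M"
  then obtain pos neg where r: "(Some (Holds l t), pos, neg) \<in> prog_Pi D \<Gamma> \<Delta> n"
    using as_supp[OF AS] by blast
  show ?thesis using Pi_holds_cases[OF r] by auto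
qed

lemma st_cons: "t \<le> n \<Longrightarrow> consistent_lits (st M t)"
  unfolding consistent_lits_def st_def using as_constr[OF AS Pi_cons] by fastforce

lemma st_closed: "t \<le> n \<Longrightarrow> closed_under D (st M t)"
  unfolding closed_under_def st_def
proof (intro allI impI)
  fix P l assume t: "t \<le> n" and h: "(P, l) \<in> static D \<and> P \<subseteq> {l. Holds l t \<in> M}"
  have "hs P t \<subseteq> M" using h by (auto simp: hs_sub)
  then show "l \<in> {l. Holds l t \<in> M}" using as_closed[OF AS Pi_static[of P l D t n]] h t by auto
qed

lemma st0: "st M 0 = \<Gamma>"
proof -
  have "\<Gamma> \<subseteq> st M 0" unfolding st_def using as_closed[OF AS Pi_init] by auto
  then show ?thesis using interp_eq[of \<Gamma> "st M 0"] G st_cons[of 0] unfolding is_state_def by auto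
qed

lemma inert: "t < n \<Longrightarrow> Holds l t \<in> M \<Longrightarrow> Holds (comp l) (Suc t) \<notin> M \<Longrightarrow> Holds l (Suc t) \<in> M"
  using as_closed[OF AS Pi_inert[of t n l]] by auto

lemma st_complete: "t \<le> n \<Longrightarrow> Pos f \<in> st M t \<or> Neg f \<in> st M t"
proof (induction t)
  case 0 then show ?case using st0 G unfolding is_state_def is_interpretation_def by auto
next
  case (Suc t)
  then have "Pos f \<in> st M t \<or> Neg f \<in> st M t" by simp
  then show ?case using inert[of t "Pos f"] inert[of t "Neg f"] Suc.prems unfolding st_def by auto
qed

lemma st_state: "t \<le> n \<Longrightarrow> is_state D (st M t)"
  unfolding is_state_def is_interpretation_def using st_cons st_complete st_closed by blast

lemma poss_iff: "t \<le> n \<Longrightarrow> Possible a t \<in> M \<longleftrightarrow> executable D a (st M t)"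
proof
  assume "Possible a t \<in> M"
  then obtain pos neg where r: "(Some (Possible a t), pos, neg) \<in> prog_Pi D \<Gamma> \<Delta> n" "pos \<subseteq> M"
    using as_supp[OF AS] by blast
  then show "executable D a (st M t)" using Pi_poss_cases[OF r(1)]
    unfolding executable_def st_def by (auto simp: hs_sub)
next
  assume t: "t \<le> n" and "executable D a (st M t)"
  then obtain P where "(a, P) \<in> execs D" "P \<subseteq> st M t" unfolding executable_def by blast
  then show "Possible a t \<in> M" using as_closed[OF AS Pi_poss[of a P D t n]] t
    by (auto simp: hs_sub st_def)
qed

lemma occ_D: "Occ a t \<in> M \<Longrightarrow> t \<le> n \<and> Possible a t \<in> M \<and> Nocc a t \<notin> M"
proof -
  assume "Occ a t \<in> M"
  then obtain pos neg where r: "(Some (Occ a t), pos, neg) \<in> prog_Pi D \<Gamma> \<Delta> n" "pos \<subseteq> M" "neg \<inter> M = {}"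
    using as_supp[OF AS] by blast
  then show ?thesis using Pi_occ_cases[OF r(1)] by auto
qed

lemma occ_uniq: "Occ a t \<in> M \<Longrightarrow> Occ b t \<in> M \<Longrightarrow> a = b"
proof (rule ccontr)
  assume a: "Occ a t \<in> M" "Occ b t \<in> M" "a \<noteq> b"
  then have "Nocc a t \<in> M" using as_closed[OF AS Pi_nocc[of a b t n]] occ_D by auto
  then show False using occ_D a by blast
qed

lemma occ_ex: "t \<le> n \<Longrightarrow> Possible a t \<in> M \<Longrightarrow> \<exists>b. Occ b t \<in> M"
proof (rule ccontr)
  assume t: "t \<le> n" and p: "Possible a t \<in> M" and no: "\<not> (\<exists>b. Occ b t \<in> M)"
  have "Nocc a t \<notin> M"
  proof
    assume "Nocc a t \<in> M"
    then obtain pos neg where r: "(Some (Nocc a t), pos, neg) \<in> prog_Pi D \<Gamma> \<Delta> n" "pos \<subseteq> M"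
      using as_supp[OF AS] by blast
    then show False using Pi_nocc_cases[OF r(1)] no by auto
  qed
  then have "Occ a t \<in> M" using as_closed[OF AS Pi_occ[of t n a]] t p by auto
  then show False using no by blast
qed

lemma step_eq:
  assumes t: "t < n"
  shows "st M (Suc t) = closure D ({f. \<exists>a P. Occ a t \<in> M \<and> (a, f, P) \<in> dynamic D \<and> P \<subseteq> st M t}
                                     \<union> (st M t \<inter> st M (Suc t)))"
proof -
  define U where "U = {f. \<exists>a P. Occ a t \<in> M \<and> (a, f, P) \<in> dynamic D \<and> P \<subseteq> st M t}
                                     \<union> (st M t \<inter> st M (Suc t))"
  define C where "C = closure D U"
  have Usub: "U \<subseteq> st M (Suc t)"
  proof
    fix f assume "f \<in> U"
    then consider (d) a P where "Occ a t \<in> M" "(a, f, P) \<in> dynamic D" "P \<subseteq> st M t"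
      | (i) "f \<in> st M (Suc t)"
      unfolding U_def by blast
    then show "f \<in> st M (Suc t)"
    proof cases
      case (d a P)
      have "hs P t \<subseteq> M" using d(3) unfolding hs_sub st_def by blast
      moreover have "Possible a t \<in> M" using occ_D d(1) by blast
      ultimately have "{Occ a t, Possible a t} \<union> hs P t \<subseteq> M" using d(1) by simp
      then have "Holds f (Suc t) \<in> M" using as_closed[OF AS Pi_dyn[of a f P D t n]] t d(2) by simp
      then show ?thesis by (simp add: st_def)
    qed
  qed
  have cl: "closed_under D (st M (Suc t))" using st_closed[of "Suc t"] t by simp
  have A: "C \<subseteq> st M (Suc t)" unfolding C_def by (rule closure_least[OF Usub cl])
  define X where "X = {h \<in> M. \<forall>l. h = Holds l (Suc t) \<longrightarrow> l \<in> C}"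
  have "M \<subseteq> X"
  proof (rule as_least[OF AS])
    fix h pos neg assume r: "(Some h, pos, neg) \<in> prog_Pi D \<Gamma> \<Delta> n" "neg \<inter> M = {}" "pos \<subseteq> X"
    have pM: "pos \<subseteq> M" using r(3) unfolding X_def by blast
    have hM: "h \<in> M" by (rule as_closed[OF AS r(1) r(2) pM])
    have "l \<in> C" if h: "h = Holds l (Suc t)" for l
      using Pi_holds_cases[OF r(1)[unfolded h]]
    proof (elim disjE exE conjE)
      fix a P t' assume "Suc t = Suc t'" "(a, l, P) \<in> dynamic D"
        "pos = {Occ a t', Possible a t'} \<union> hs P t'"
      then have "Occ a t \<in> M" "P \<subseteq> st M t" using pM by (auto simp: hs_sub st_def)
      then have "l \<in> U" unfolding U_def using \<open>(a, l, P) \<in> dynamic D\<close> by blast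
      then show ?thesis unfolding C_def using closure_sub by blast
    next
      fix P assume sP: "(P, l) \<in> static D" "pos = hs P (Suc t)"
      have "P \<subseteq> C"
      proof
        fix p assume "p \<in> P"
        then have "Holds p (Suc t) \<in> X" using r(3) sP(2) by (auto simp: hs_def)
        then show "p \<in> C" unfolding X_def by blast
      qed
      then show ?thesis using closure_closed[of D U] sP(1) unfolding C_def closed_under_def by blast
    next
      fix t' assume "Suc t = Suc t'" "pos = {Holds l t'}"
      then have "l \<in> st M t" using pM by (simp add: st_def)
      moreover have "l \<in> st M (Suc t)" using hM h by (simp add: st_def)
      ultimately have "l \<in> U" unfolding U_def by blast
      then show ?thesis unfolding C_def using closure_sub by blast
    qed simp
    then show "h \<in> X" using hM unfolding X_def by blast
  qed
  then have "st M (Suc t) \<subseteq> C" unfolding st_def X_def by blast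
  then show ?thesis using A unfolding C_def U_def by blast
qed

lemma traj_step: "t < n \<Longrightarrow> Occ a t \<in> M \<Longrightarrow> st M (Suc t) \<in> Phi D a (st M t)"
proof -
  assume t: "t < n" and o: "Occ a t \<in> M"
  have ex: "executable D a (st M t)" using poss_iff[of t a] occ_D[OF o] by simp
  have "{f. \<exists>a' P. Occ a' t \<in> M \<and> (a', f, P) \<in> dynamic D \<and> P \<subseteq> st M t} = E D a (st M t)"
    unfolding E_def using occ_uniq o by blast
  then have eq: "st M (Suc t) = closure D (E D a (st M t) \<union> (st M t \<inter> st M (Suc t)))"
    using step_eq[OF t] by simp
  show ?thesis unfolding Phi_def Cl_eq_def using ex eq st_state[of "Suc t"] st_cons[of "Suc t"] t
    by simp
qed

lemma noocc_step: "t < n \<Longrightarrow> \<forall>b. Occ b t \<notin> M \<Longrightarrow> st M (Suc t) = st M t"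
proof -
  assume t: "t < n" and no: "\<forall>b. Occ b t \<notin> M"
  have "st M (Suc t) = closure D (st M t \<inter> st M (Suc t))"
    using step_eq[OF t] no by simp
  also have "\<dots> \<subseteq> st M t"
  proof (rule closure_least)
    show "closed_under D (st M t)" using st_closed[of t] t by simp
  qed blast
  finally have s: "st M (Suc t) \<subseteq> st M t" .
  have i: "is_interpretation (st M (Suc t))" using st_state[of "Suc t"] t
    unfolding is_state_def by simp
  have c: "consistent_lits (st M t)" using st_cons[of t] t by simp
  show ?thesis by (rule interp_eq[OF i c s])
qed

lemma goal_st: "\<Delta> \<subseteq> st M n"
proof -
  have "Goal \<in> M" using as_constr[OF AS Pi_goalc] by auto
  then obtain pos neg where r: "(Some Goal, pos, neg) \<in> prog_Pi D \<Gamma> \<Delta> n" "pos \<subseteq> M"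
    using as_supp[OF AS] by blast
  then show ?thesis using Pi_goal_cases[OF r(1)] by (auto simp: hs_sub st_def)
qed

end


context
  fixes D :: "('f, 'a) domain" and \<Gamma> \<Delta> :: "'f lit set" and n :: nat and M
  assumes AS: "answer_set (prog_Pi D \<Gamma> \<Delta> n) M" and G: "is_state D \<Gamma>"
begin

lemmas L = st_state[OF AS G] poss_iff[OF AS G] occ_D[OF AS G] occ_uniq[OF AS G]
  occ_ex[OF AS G] traj_step[OF AS G] noocc_step[OF AS G] goal_st[OF AS G] st0[OF AS G]

lemma part2:
  assumes det: "deterministic D"
  shows "\<exists>k\<le>n. \<exists>as. length as = k
               \<and> (\<forall>i<k. \<forall>b. Occ b i \<in> M \<longleftrightarrow> b = as ! i)
               \<and> is_plan D \<Gamma> \<Delta> as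
               \<and> (k < n \<longrightarrow> (\<forall>ss. trajectory D as ss \<and> ss ! 0 = \<Gamma> \<longrightarrow>
                                   (\<forall>a. \<not> executable D a (last ss))))"
proof -
  define k where "k = (if \<exists>t<n. \<forall>b. Occ b t \<notin> M then LEAST t. t < n \<and> (\<forall>b. Occ b t \<notin> M) else n)"
  have kF: "k = n" if "\<not> (\<exists>t<n. \<forall>b. Occ b t \<notin> M)"
    unfolding k_def by (rule if_not_P[OF that])
  have kn: "k \<le> n"
  proof (cases "\<exists>t<n. \<forall>b. Occ b t \<notin> M")
    case True
    then have "k < n \<and> (\<forall>b. Occ b k \<notin> M)" unfolding k_def using LeastI_ex[of "\<lambda>t. t < n \<and> (\<forall>b. Occ b t \<notin> M)"] by simp
    then show ?thesis by simp
  next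
    case False
    have "k = n" unfolding k_def by (rule if_not_P[OF False])
    then show ?thesis by simp
  qed
  have nok: "\<forall>b. Occ b k \<notin> M" if "k < n"
  proof (cases "\<exists>t<n. \<forall>b. Occ b t \<notin> M")
    case True
    then show ?thesis unfolding k_def using LeastI_ex[of "\<lambda>t. t < n \<and> (\<forall>b. Occ b t \<notin> M)"] by simp
  next
    case False
    then show ?thesis using kF that by simp
  qed
  have occk: "\<exists>b. Occ b i \<in> M" if "i < k" for i
  proof (cases "\<exists>t<n. \<forall>b. Occ b t \<notin> M")
    case True
    then have "k = (LEAST t. t < n \<and> (\<forall>b. Occ b t \<notin> M))" unfolding k_def by simp
    then have "\<not> (i < n \<and> (\<forall>b. Occ b i \<notin> M))" using not_less_Least[of i "\<lambda>t. t < n \<and> (\<forall>b. Occ b t \<notin> M)"] that by simp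
    then show ?thesis using that kn by auto
  next
    case False
    then show ?thesis using that kF by auto
  qed
  have noex: "\<not> executable D a (st M k)" if "k < n" for a
  proof
    assume "executable D a (st M k)"
    then have "Possible a k \<in> M" using L(2)[of k a] that by simp
    then show False using L(5)[of k a] nok that by auto
  qed
  have stay: "k + j \<le> n \<Longrightarrow> st M (k + j) = st M k" for j
  proof (induction j)
    case (Suc j)
    then have kj: "k + j < n" "st M (k + j) = st M k" by auto
    have "\<forall>b. Occ b (k + j) \<notin> M"
    proof (intro allI notI)
      fix b assume "Occ b (k + j) \<in> M"
      then have "Possible b (k + j) \<in> M" using L(3) by blast
      then have "executable D b (st M k)" using L(2)[of "k+j" b] kj by simp
      then show False using noex[of b] kj by simp
    qed
    then show ?case using L(7)[of "k + j"] kj by simp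
  qed simp
  have stn: "st M n = st M k" using stay[of "n - k"] kn by simp
  define as where "as = map (\<lambda>i. THE b. Occ b i \<in> M) [0..<k]"
  have las: "length as = k" unfolding as_def by simp
  have asi: "\<forall>b. Occ b i \<in> M \<longleftrightarrow> b = as ! i" if ik: "i < k" for i
  proof -
    obtain b where b: "Occ b i \<in> M" using occk[OF ik] by blast
    have "(THE b. Occ b i \<in> M) = b" using b L(4) by blast
    then have "as ! i = b" unfolding as_def using ik by simp
    then show ?thesis using b L(4) by blast
  qed
  define ss where "ss = map (st M) [0..<Suc k]"
  have tr: "trajectory D as ss"
    unfolding trajectory_def
  proof (intro conjI allI impI)
    show "length ss = Suc (length as)" unfolding ss_def las by simp
  next
    fix i assume "i < length ss"
    then show "is_state D (ss ! i)" unfolding ss_def using L(1) kn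
      by (simp del: upt_Suc)
  next
    fix i assume i: "i < length as"
    then have "Occ (as ! i) i \<in> M" using asi las by simp
    then have "st M (Suc i) \<in> Phi D (as ! i) (st M i)" using L(6)[of i] i las kn by simp
    then show "ss ! Suc i \<in> Phi D (as ! i) (ss ! i)" unfolding ss_def using i las
      by (simp del: upt_Suc add: nth_upt)
  qed
  have ss0: "ss ! 0 = \<Gamma>" unfolding ss_def using L(9) by (simp del: upt_Suc)
  have lastss: "last ss = st M k" unfolding ss_def by simp
  have plan: "is_plan D \<Gamma> \<Delta> as"
    unfolding is_plan_def using tr ss0 lastss stn L(8) by metis
  have uniq: "\<forall>a. \<not> executable D a (last ss')" if "k < n" "trajectory D as ss'" "ss' ! 0 = \<Gamma>" for ss'
  proof -
    have lss: "length ss' = Suc k" using that(2) las unfolding trajectory_def by simp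
    have "i \<le> k \<Longrightarrow> ss' ! i = st M i" for i
    proof (induction i)
      case 0 then show ?case using that(3) L(9) by simp
    next
      case (Suc i)
      then have IH: "ss' ! i = st M i" and ik: "i < k" by auto
      have "ss' ! Suc i \<in> Phi D (as ! i) (ss' ! i)" using that(2) ik las unfolding trajectory_def by simp
      moreover have "st M (Suc i) \<in> Phi D (as ! i) (st M i)"
        using L(6)[of i] asi[OF ik] ik kn by simp
      moreover have "is_state D (st M i)" using L(1)[of i] ik kn by simp
      ultimately show ?case using det IH unfolding deterministic_def by metis
    qed
    note E = this
    have "ss' \<noteq> []" using lss by auto
    then have "last ss' = ss' ! k" using lss by (simp add: last_conv_nth)
    then have "last ss' = st M k" using E by simp
    then show ?thesis using noex that(1) by simp
  qed
  show ?thesis using kn las asi plan uniq by blast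
qed

end


lemma interp_comp: "is_interpretation s \<Longrightarrow> comp l \<notin> s \<Longrightarrow> l \<in> s"
  unfolding is_interpretation_def by (cases l) auto

lemma cons_comp: "consistent_lits s \<Longrightarrow> l \<in> s \<Longrightarrow> comp l \<notin> s"
  unfolding consistent_lits_def by (cases l) auto

lemma part1:
  fixes D :: "('f, 'a) domain" and \<Gamma> \<Delta> :: "'f lit set" and n :: nat
    and acts :: "'a list" and ss :: "'f lit set list"
  assumes G: "is_state D \<Gamma>" and len: "length acts = n" and tr: "trajectory D acts ss"
    and ss0: "ss ! 0 = \<Gamma>" and gl: "\<Delta> \<subseteq> last ss"
  shows "\<exists>M. answer_set (prog_Pi D \<Gamma> \<Delta> n) M \<and> (\<forall>i<n. Occ (acts ! i) i \<in> M)"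
proof -
  have lss: "length ss = Suc n" using tr len unfolding trajectory_def by simp
  have lastss: "last ss = ss ! n"
  proof -
    have "ss \<noteq> []" using lss by auto
    then show ?thesis using lss by (simp add: last_conv_nth)
  qed
  have sst: "is_state D (ss ! i)" if "i \<le> n" for i
    using tr lss that unfolding trajectory_def by auto
  have phi: "ss ! Suc i \<in> Phi D (acts ! i) (ss ! i)" if "i < n" for i
    using tr len that unfolding trajectory_def by auto
  have exi: "executable D (acts ! i) (ss ! i)" if "i < n" for i
    using phi[OF that] unfolding Phi_def by (auto split: if_splits)
  have stepeq: "ss ! Suc i = closure D (E D (acts ! i) (ss ! i) \<union> (ss ! i \<inter> ss ! Suc i))" if "i < n" for i
    using phi[OF that] unfolding Phi_def Cl_eq_def by (auto split: if_splits)
  define c where "c = (if \<exists>a. executable D a (ss ! n) then Some (SOME a. executable D a (ss ! n)) else None)"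
  define act where "act t = (if t < n then Some (acts ! t) else if t = n then c else None)" for t
  have act_ex: "t \<le> n \<and> executable D a (ss ! t)" if "act t = Some a" for t a
  proof (cases "t < n")
    case True then show ?thesis using that exi unfolding act_def by auto
  next
    case False
    have tn: "t = n"
    proof (rule ccontr)
      assume "t \<noteq> n"
      then have "act t = None" using False by (simp add: act_def)
      then show False using that by simp
    qed
    have ca: "c = Some a" using that False tn by (simp add: act_def)
    have ex: "\<exists>a. executable D a (ss ! n)" using ca unfolding c_def by (auto split: if_splits)
    then have "a = (SOME a. executable D a (ss ! n))" using ca by (simp add: c_def)
    then show ?thesis using someI_ex[OF ex] tn by simp
  qed
  have act_some: "\<exists>b. act t = Some b" if "t \<le> n" "executable D a (ss ! t)" for t a
  proof (cases "t < n")
    case True then show ?thesis unfolding act_def by simp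
  next
    case False
    then have "t = n" using that by simp
    then show ?thesis using that unfolding act_def c_def by auto
  qed
  define M where "M = {Holds l t | l t. t \<le> n \<and> l \<in> ss ! t}
      \<union> {Possible a t | a t. t \<le> n \<and> executable D a (ss ! t)}
      \<union> {Occ a t | a t. act t = Some a}
      \<union> {Nocc a t | a t. \<exists>b. act t = Some b \<and> a \<noteq> b} \<union> {Goal}"
  have mH: "Holds l t \<in> M \<longleftrightarrow> t \<le> n \<and> l \<in> ss ! t" for l t unfolding M_def by auto
  have mP: "Possible a t \<in> M \<longleftrightarrow> t \<le> n \<and> executable D a (ss ! t)" for a t unfolding M_def by auto
  have mO: "Occ a t \<in> M \<longleftrightarrow> act t = Some a" for a t unfolding M_def by auto
  have mN: "Nocc a t \<in> M \<longleftrightarrow> (\<exists>b. act t = Some b \<and> a \<noteq> b)" for a t unfolding M_def by auto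
  have mG: "Goal \<in> M" unfolding M_def by auto
  let ?P = "prog_Pi D \<Gamma> \<Delta> n"
  have closedM: "h \<in> M" if r: "(Some h, pos, neg) \<in> ?P" "neg \<inter> M = {}" "pos \<subseteq> M" for h pos neg
  proof (cases h)
    case (Holds l t)
    show ?thesis using Pi_holds_cases[OF r(1)[unfolded Holds]]
    proof (elim disjE exE conjE)
      assume "t = 0" "l \<in> \<Gamma>" then show ?thesis using Holds mH ss0 by simp
    next
      fix a P t' assume a: "t = Suc t'" "t' < n" "(a, l, P) \<in> dynamic D" "pos = {Occ a t', Possible a t'} \<union> hs P t'"
      then have "act t' = Some a" using r(3) mO by auto
      then have aa: "a = acts ! t'" using a(2) unfolding act_def by simp
      have "P \<subseteq> ss ! t'" using r(3) a(4) mH by (auto simp: hs_def)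
      then have "l \<in> E D (acts ! t') (ss ! t')" unfolding E_def using a(3) aa by blast
      then have "l \<in> ss ! Suc t'" using stepeq[OF a(2)] closure_sub by blast
      then show ?thesis using Holds a mH by simp
    next
      fix P assume a: "(P, l) \<in> static D" "t \<le> n" "pos = hs P t"
      have "P \<subseteq> ss ! t" using r(3) a(3) mH by (auto simp: hs_def)
      then have "l \<in> ss ! t" using sst[OF a(2)] a(1) unfolding is_state_def closed_under_def by blast
      then show ?thesis using Holds a mH by simp
    next
      fix t' assume a: "t = Suc t'" "t' < n" "pos = {Holds l t'}" "neg = {Holds (comp l) t}"
      have "comp l \<notin> ss ! t"
      proof
        assume "comp l \<in> ss ! t"
        then have "Holds (comp l) t \<in> M" using mH a by simp
        then show False using r(2) a(4) by blast
      qed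
      moreover have "is_interpretation (ss ! t)" using sst[of t] a unfolding is_state_def by simp
      ultimately have "l \<in> ss ! t" using interp_comp by blast
      then show ?thesis using Holds a mH by simp
    qed
  next
    case (Possible a t)
    obtain P where a: "(a, P) \<in> execs D" "t \<le> n" "pos = hs P t"
      using Pi_poss_cases[OF r(1)[unfolded Possible]] by blast
    then have "P \<subseteq> ss ! t" using r(3) mH by (auto simp: hs_def)
    then show ?thesis using a Possible mP unfolding executable_def by blast
  next
    case (Occ a t)
    have a: "t \<le> n" "pos = {Possible a t}" "neg = {Nocc a t}"
      using Pi_occ_cases[OF r(1)[unfolded Occ]] by simp_all
    then have ex: "executable D a (ss ! t)" using r(3) mP by simp
    obtain b where b: "act t = Some b" using act_some[OF a(1) ex] by blast
    have "Nocc a t \<notin> M" using r(2) a(3) by blast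
    then have "b = a" using b mN by blast
    then show ?thesis using b Occ mO by simp
  next
    case (Nocc a t)
    obtain b where a: "a \<noteq> b" "pos = {Occ b t}"
      using Pi_nocc_cases[OF r(1)[unfolded Nocc]] by blast
    then have "act t = Some b" using r(3) mO by simp
    then show ?thesis using Nocc a mN by blast
  next
    case Goal then show ?thesis using mG by simp
  qed
  have sub1: "least_model (reduct ?P M) \<subseteq> M"
    by (rule lm_least) (auto simp: reduct_iff intro: closedM)
  have sub2: "M \<subseteq> X" if XC: "\<And>h pos neg. (Some h, pos, neg) \<in> ?P \<Longrightarrow> neg \<inter> M = {} \<Longrightarrow> pos \<subseteq> X \<Longrightarrow> h \<in> X" for X
  proof -
    have possX: "Possible a t \<in> X" if pt: "t \<le> n" "executable D a (ss ! t)" "\<forall>l\<in>ss ! t. Holds l t \<in> X" for a t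
    proof -
      obtain P where P: "(a, P) \<in> execs D" "P \<subseteq> ss ! t" using pt(2) unfolding executable_def by blast
      have "hs P t \<subseteq> X" using P(2) pt(3) by (auto simp: hs_def)
      then show ?thesis using XC[OF Pi_poss[OF P(1) pt(1)]] by simp
    qed
    have occX: "Occ a t \<in> X" if "act t = Some a" "\<forall>l\<in>ss ! t. Holds l t \<in> X" for a t
    proof -
      have "t \<le> n" "executable D a (ss ! t)" using act_ex[OF that(1)] by auto
      then have "Possible a t \<in> X" using possX that(2) by blast
      moreover have "Nocc a t \<notin> M" using mN that(1) by simp
      ultimately show ?thesis using XC[OF Pi_occ[of t n a]] \<open>t \<le> n\<close> by auto
    qed
    have HX: "t \<le> n \<Longrightarrow> \<forall>l\<in>ss ! t. Holds l t \<in> X" for t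
    proof (induction t)
      case 0
      then show ?case using XC[OF Pi_init] ss0 by auto
    next
      case (Suc t)
      then have t: "t < n" and IH: "\<forall>l\<in>ss ! t. Holds l t \<in> X" by auto
      let ?Y = "{l. Holds l (Suc t) \<in> X}"
      have "E D (acts ! t) (ss ! t) \<union> (ss ! t \<inter> ss ! Suc t) \<subseteq> ?Y"
      proof
        fix l assume "l \<in> E D (acts ! t) (ss ! t) \<union> (ss ! t \<inter> ss ! Suc t)"
        then show "l \<in> ?Y"
        proof
          assume "l \<in> E D (acts ! t) (ss ! t)"
          then obtain P where P: "(acts ! t, l, P) \<in> dynamic D" "P \<subseteq> ss ! t" unfolding E_def by blast
          have "act t = Some (acts ! t)" using t unfolding act_def by simp
          then have o: "Occ (acts ! t) t \<in> X" using occX IH by blast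
          have p: "Possible (acts ! t) t \<in> X" using possX exi[OF t] IH t by simp
          have "hs P t \<subseteq> X" using P(2) IH by (auto simp: hs_def)
          then have "{Occ (acts ! t) t, Possible (acts ! t) t} \<union> hs P t \<subseteq> X" using o p by simp
          then show ?thesis using XC[OF Pi_dyn[OF P(1) t]] by simp
        next
          assume l: "l \<in> ss ! t \<inter> ss ! Suc t"
          have "consistent_lits (ss ! Suc t)" using sst[of "Suc t"] t
            unfolding is_state_def is_interpretation_def by simp
          then have "comp l \<notin> ss ! Suc t" using cons_comp l by blast
          then have "{Holds (comp l) (Suc t)} \<inter> M = {}" using mH by simp
          then show ?thesis using XC[OF Pi_inert[OF t]] l IH by simp
        qed
      qed
      moreover have "closed_under D ?Y"
        unfolding closed_under_def
      proof (intro allI impI)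
        fix P l assume "(P, l) \<in> static D \<and> P \<subseteq> ?Y"
        then show "l \<in> ?Y" using XC[OF Pi_static[of P l D "Suc t" n]] Suc.prems by (auto simp: hs_def)
      qed
      ultimately have "closure D (E D (acts ! t) (ss ! t) \<union> (ss ! t \<inter> ss ! Suc t)) \<subseteq> ?Y"
        by (rule closure_least)
      then show ?case using stepeq[OF t] by auto
    qed
    show "M \<subseteq> X"
    proof
      fix x assume x: "x \<in> M"
      show "x \<in> X"
      proof (cases x)
        case (Holds l t) then show ?thesis using x mH HX by auto
      next
        case (Possible a t) then show ?thesis using x mP HX possX by auto
      next
        case (Occ a t) then show ?thesis using x mO HX occX act_ex by blast
      next
        case (Nocc a t)
        then obtain b where b: "act t = Some b" "a \<noteq> b" using x mN by auto
        then have "t \<le> n" using act_ex by blast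
        then have "Occ b t \<in> X" using occX b HX by blast
        then show ?thesis using XC[OF Pi_nocc[OF b(2) \<open>t \<le> n\<close>]] Nocc by simp
      next
        case Goal
        have "hs \<Delta> n \<subseteq> X" using gl lastss HX[of n] by (auto simp: hs_def)
        then show ?thesis using XC[OF Pi_goal] Goal by simp
      qed
    qed
  qed
  have sup: "M \<subseteq> least_model (reduct ?P M)"
    unfolding least_model_def
    proof (rule Inter_greatest)
      fix X assume "X \<in> {X. \<forall>h pos. (Some h, pos) \<in> reduct ?P M \<and> pos \<subseteq> X \<longrightarrow> h \<in> X}"
      then have XC: "\<forall>h pos. (Some h, pos) \<in> reduct ?P M \<and> pos \<subseteq> X \<longrightarrow> h \<in> X" by simp
      show "M \<subseteq> X"
      proof (rule sub2)
        fix h pos neg assume "(Some h, pos, neg) \<in> ?P" "neg \<inter> M = {}" "pos \<subseteq> X"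
        then have "(Some h, pos) \<in> reduct ?P M" "pos \<subseteq> X" using reduct_iff by blast+
        then show "h \<in> X" using XC by blast
      qed
    qed
  have eqM: "M = least_model (reduct ?P M)" using sup sub1 by (rule subset_antisym)
  have cons: "\<not> pos \<subseteq> M" if np: "(None, pos) \<in> reduct ?P M" for pos
  proof
    assume pM: "pos \<subseteq> M"
    from np[unfolded reduct_iff] obtain neg where r: "(None, pos, neg) \<in> ?P" "neg \<inter> M = {}"
      by (elim exE conjE)
    from Pi_none_cases[OF r(1)] show False
    proof
      assume "\<exists>f t. t \<le> n \<and> pos = {Holds (Pos f) t, Holds (Neg f) t} \<and> neg = {}"
      then obtain f t where a: "t \<le> n" "pos = {Holds (Pos f) t, Holds (Neg f) t}" by blast
      have "Pos f \<in> ss ! t" "Neg f \<in> ss ! t" using pM a mH by auto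
      moreover have "consistent_lits (ss ! t)" using sst[OF a(1)] unfolding is_state_def is_interpretation_def by simp
      ultimately show False unfolding consistent_lits_def by blast
    next
      assume "pos = {} \<and> neg = {Goal}"
      then show False using r(2) mG by blast
    qed
  qed
  have "answer_set ?P M" unfolding answer_set_def using eqM cons by blast
  moreover have "\<forall>i<n. Occ (acts ! i) i \<in> M" using mO unfolding act_def by simp
  ultimately show ?thesis by blast
qed

theorem corollary1:
  fixes D :: "('f::finite, 'a::finite) domain"
    and \<Gamma> \<Delta> :: "'f lit set"
    and n :: nat
  assumes "finite (static D)" and "finite (dynamic D)" and "finite (execs D)"
    and "problem_consistent D \<Gamma>"
    and "deterministic D"
  shows "(\<forall>as. length as = n \<and> is_plan D \<Gamma> \<Delta> as \<longrightarrow>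
            (\<exists>M. answer_set (prog_Pi D \<Gamma> \<Delta> n) M \<and> (\<forall>i<n. Occ (as ! i) i \<in> M)))
       \<and> (\<forall>M. answer_set (prog_Pi D \<Gamma> \<Delta> n) M \<longrightarrow>
            (\<exists>k\<le>n. \<exists>as. length as = k
               \<and> (\<forall>i<k. \<forall>b. Occ b i \<in> M \<longleftrightarrow> b = as ! i)
               \<and> is_plan D \<Gamma> \<Delta> as
               \<and> (k < n \<longrightarrow> (\<forall>ss. trajectory D as ss \<and> ss ! 0 = \<Gamma> \<longrightarrow>
                                   (\<forall>a. \<not> executable D a (last ss))))))"
proof -
  have G: "is_state D \<Gamma>" using assms(4) unfolding problem_consistent_def by simp
  show ?thesis
  proof (intro conjI allI impI)
    fix acts :: "'a list"
    assume h: "length acts = n \<and> is_plan D \<Gamma> \<Delta> acts"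
    then obtain ss where ss: "trajectory D acts ss" "ss ! 0 = \<Gamma>" "\<Delta> \<subseteq> last ss"
      unfolding is_plan_def by blast
    show "\<exists>M. answer_set (prog_Pi D \<Gamma> \<Delta> n) M \<and> (\<forall>i<n. Occ (acts ! i) i \<in> M)"
      using part1[OF G _ ss] h by blast
  next
    fix M assume "answer_set (prog_Pi D \<Gamma> \<Delta> n) M"
    from part2[OF this G assms(5)]
    show "\<exists>k\<le>n. \<exists>as. length as = k
               \<and> (\<forall>i<k. \<forall>b. Occ b i \<in> M \<longleftrightarrow> b = as ! i)
               \<and> is_plan D \<Gamma> \<Delta> as
               \<and> (k < n \<longrightarrow> (\<forall>ss. trajectory D as ss \<and> ss ! 0 = \<Gamma> \<longrightarrow>
                                   (\<forall>a. \<not> executable D a (last ss))))" .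
  qed
qed

end
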